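(* For every $\ell\in\mathbb N\cup\{\infty\}$ (with $\mathbb N$ the positive integers), there exists an integral domain that is not atomic, is an IDF domain, and contains exactly $\ell$ irreducible elements up to associates.
   Context: For an integral domain $R$, an irreducible (atom) is a nonzero nonunit $a$ such that $a=uv$ implies $u$ or $v$ is a unit. $R$ is atomic if every nonzero nonunit is a finite product of irreducibles. $R$ is an IDF domain if every nonzero element is divisible by only finitely many irreducibles up to associates. *)

theory Defs
  imports "HOL-Algebra.Ring" "HOL-Algebra.Divisibility" "HOL-Library.Extended_Nat"
begin

definition atom :: "('a, 'b) ring_scheme \<Rightarrow> 'a \<Rightarrow> bool" where
  "atom R a \<longleftrightarrow> a \<in> carrier R \<and> a \<noteq> \<zero>\<^bsub>R\<^esub> \<and> a \<notin> Units R \<and>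
     (\<forall>u\<in>carrier R. \<forall>v\<in>carrier R. a = u \<otimes>\<^bsub>R\<^esub> v \<longrightarrow> u \<in> Units R \<or> v \<in> Units R)"

definition atomic_dom :: "('a, 'b) ring_scheme \<Rightarrow> bool" where
  "atomic_dom R \<longleftrightarrow> (\<forall>x\<in>carrier R. x \<noteq> \<zero>\<^bsub>R\<^esub> \<and> x \<notin> Units R \<longrightarrow>
     (\<exists>as. as \<noteq> [] \<and> (\<forall>a\<in>set as. atom R a) \<and> x = foldr (\<lambda>a b. a \<otimes>\<^bsub>R\<^esub> b) as \<one>\<^bsub>R\<^esub>))"

definition assoc_class :: "('a, 'b) ring_scheme \<Rightarrow> 'a \<Rightarrow> 'a set" where
  "assoc_class R a = {b \<in> carrier R. a \<sim>\<^bsub>R\<^esub> b}"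

definition IDF_dom :: "('a, 'b) ring_scheme \<Rightarrow> bool" where
  "IDF_dom R \<longleftrightarrow> (\<forall>x\<in>carrier R. x \<noteq> \<zero>\<^bsub>R\<^esub> \<longrightarrow>
     finite (assoc_class R ` {a. atom R a \<and> a divides\<^bsub>R\<^esub> x}))"

definition atom_classes :: "('a, 'b) ring_scheme \<Rightarrow> 'a set set" where
  "atom_classes R = assoc_class R ` {a. atom R a}"

definition ecard :: "'a set \<Rightarrow> enat" where
  "ecard S = (if finite S then enat (card S) else \<infinity>)"

end

theory Submission
  imports Defs "HOL-Library.Countable" "HOL-Computational_Algebra.Computational_Algebra"
    "HOL-Computational_Algebra.Field_as_Ring"
begin

definition sdvd :: "'a::idom set \<Rightarrow> 'a \<Rightarrow> 'a \<Rightarrow> bool" where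
  "sdvd S a b \<longleftrightarrow> (\<exists>c\<in>S. b = a * c)"
definition sunit :: "'a::idom set \<Rightarrow> 'a \<Rightarrow> bool" where
  "sunit S u \<longleftrightarrow> u \<in> S \<and> (\<exists>v\<in>S. u * v = 1)"
definition satom :: "'a::idom set \<Rightarrow> 'a \<Rightarrow> bool" where
  "satom S a \<longleftrightarrow> a \<in> S \<and> a \<noteq> 0 \<and> \<not> sunit S a \<and>
     (\<forall>u\<in>S. \<forall>v\<in>S. a = u * v \<longrightarrow> sunit S u \<or> sunit S v)"
definition sassoc :: "'a::idom set \<Rightarrow> 'a \<Rightarrow> 'a \<Rightarrow> bool" where
  "sassoc S a b \<longleftrightarrow> sdvd S a b \<and> sdvd S b a"
definition sclass :: "'a::idom set \<Rightarrow> 'a \<Rightarrow> 'a set" where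
  "sclass S a = {b\<in>S. sassoc S a b}"

locale tr =
  fixes S :: "'a::idom set" and e :: "'a \<Rightarrow> nat set"
  assumes S0: "0 \<in> S" and S1: "1 \<in> S" and Sadd: "\<And>a b. a \<in> S \<Longrightarrow> b \<in> S \<Longrightarrow> a + b \<in> S"
    and Smul: "\<And>a b. a \<in> S \<Longrightarrow> b \<in> S \<Longrightarrow> a * b \<in> S"
    and Sneg: "\<And>a. a \<in> S \<Longrightarrow> - a \<in> S"
    and inj: "inj_on e S"
begin

definition d where "d = inv_into S e"

definition R :: "nat set ring" where
  "R = \<lparr>carrier = e ` S, monoid.mult = (\<lambda>x y. e (d x * d y)), one = e 1,
        zero = e 0, add = (\<lambda>x y. e (d x + d y))\<rparr>"

lemma d_e[simp]: "a \<in> S \<Longrightarrow> d (e a) = a"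
  unfolding d_def using inj by (simp add: inv_into_f_f)

lemma e_eq[simp]: "a \<in> S \<Longrightarrow> b \<in> S \<Longrightarrow> e a = e b \<longleftrightarrow> a = b"
  using inj by (auto dest: inj_onD)

lemma R_simps[simp]: "carrier R = e ` S" "\<one>\<^bsub>R\<^esub> = e 1" "\<zero>\<^bsub>R\<^esub> = e 0"
  "a \<in> S \<Longrightarrow> b \<in> S \<Longrightarrow> e a \<otimes>\<^bsub>R\<^esub> e b = e (a * b)"
  "a \<in> S \<Longrightarrow> b \<in> S \<Longrightarrow> e a \<oplus>\<^bsub>R\<^esub> e b = e (a + b)"
  by (auto simp: R_def)

lemma domR: "domain R"
proof (rule domain.intro)
  show "cring R"
  proof (rule cringI)
    show "abelian_group R"
    proof (rule abelian_groupI)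
      fix x assume "x \<in> carrier R"
      then obtain a where a: "a \<in> S" "x = e a" by auto
      have "e (- a) \<in> carrier R" using a Sneg by auto
      moreover have "e (- a) \<oplus>\<^bsub>R\<^esub> x = \<zero>\<^bsub>R\<^esub>" using a Sneg by simp
      ultimately show "\<exists>y\<in>carrier R. y \<oplus>\<^bsub>R\<^esub> x = \<zero>\<^bsub>R\<^esub>" by blast
    next
      fix x y assume "x \<in> carrier R" "y \<in> carrier R"
      then show "x \<oplus>\<^bsub>R\<^esub> y \<in> carrier R" using Sadd by auto
    next
      show "\<zero>\<^bsub>R\<^esub> \<in> carrier R" using S0 by simp
    next
      fix x y z assume "x \<in> carrier R" "y \<in> carrier R" "z \<in> carrier R"
      then show "x \<oplus>\<^bsub>R\<^esub> y \<oplus>\<^bsub>R\<^esub> z = x \<oplus>\<^bsub>R\<^esub> (y \<oplus>\<^bsub>R\<^esub> z)"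
        using Sadd by (auto simp: add.assoc)
    next
      fix x y assume "x \<in> carrier R" "y \<in> carrier R"
      then show "x \<oplus>\<^bsub>R\<^esub> y = y \<oplus>\<^bsub>R\<^esub> x" by (auto simp: add.commute)
    next
      fix x assume "x \<in> carrier R"
      then show "\<zero>\<^bsub>R\<^esub> \<oplus>\<^bsub>R\<^esub> x = x" using S0 by auto
    qed
    show "comm_monoid R"
    proof (rule comm_monoidI)
      fix x y assume "x \<in> carrier R" "y \<in> carrier R"
      then show "x \<otimes>\<^bsub>R\<^esub> y \<in> carrier R" using Smul by auto
    next
      show "\<one>\<^bsub>R\<^esub> \<in> carrier R" using S1 by simp
    next
      fix x y z assume "x \<in> carrier R" "y \<in> carrier R" "z \<in> carrier R"
      then show "x \<otimes>\<^bsub>R\<^esub> y \<otimes>\<^bsub>R\<^esub> z = x \<otimes>\<^bsub>R\<^esub> (y \<otimes>\<^bsub>R\<^esub> z)"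
        using Smul by (auto simp: mult.assoc)
    next
      fix x y assume "x \<in> carrier R" "y \<in> carrier R"
      then show "x \<otimes>\<^bsub>R\<^esub> y = y \<otimes>\<^bsub>R\<^esub> x" by (auto simp: mult.commute)
    next
      fix x assume "x \<in> carrier R"
      then show "\<one>\<^bsub>R\<^esub> \<otimes>\<^bsub>R\<^esub> x = x" using S1 by auto
    qed
    fix x y z assume "x \<in> carrier R" "y \<in> carrier R" "z \<in> carrier R"
    then show "(x \<oplus>\<^bsub>R\<^esub> y) \<otimes>\<^bsub>R\<^esub> z = x \<otimes>\<^bsub>R\<^esub> z \<oplus>\<^bsub>R\<^esub> y \<otimes>\<^bsub>R\<^esub> z"
      using Sadd Smul by (auto simp: distrib_right)
  qed
  show "domain_axioms R"
  proof (rule domain_axioms.intro)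
    show "\<one>\<^bsub>R\<^esub> \<noteq> \<zero>\<^bsub>R\<^esub>" using S0 S1 by simp
    fix a b assume "a \<otimes>\<^bsub>R\<^esub> b = \<zero>\<^bsub>R\<^esub>" "a \<in> carrier R" "b \<in> carrier R"
    then show "a = \<zero>\<^bsub>R\<^esub> \<or> b = \<zero>\<^bsub>R\<^esub>" using S0 Smul by auto
  qed
qed

lemma units_R: "a \<in> S \<Longrightarrow> e a \<in> Units R \<longleftrightarrow> sunit S a"
  by (auto simp: Units_def sunit_def S1 Smul mult.commute)

lemma divides_R: "a \<in> S \<Longrightarrow> b \<in> S \<Longrightarrow> e a divides\<^bsub>R\<^esub> e b \<longleftrightarrow> sdvd S a b"
  by (auto simp: factor_def sdvd_def Smul)

lemma assoc_R: "a \<in> S \<Longrightarrow> b \<in> S \<Longrightarrow> e a \<sim>\<^bsub>R\<^esub> e b \<longleftrightarrow> sassoc S a b"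
  by (simp add: associated_def sassoc_def divides_R)

lemma atom_R: "a \<in> S \<Longrightarrow> atom R (e a) \<longleftrightarrow> satom S a"
  unfolding atom_def satom_def using S0 by (auto simp: units_R Smul)

lemma atom_R': "atom R x \<Longrightarrow> \<exists>a. x = e a \<and> satom S a"
  by (metis atom_R atom_def R_simps(1) imageE)

lemma class_R: "a \<in> S \<Longrightarrow> assoc_class R (e a) = e ` sclass S a"
  by (auto simp: assoc_class_def sclass_def assoc_R)

lemma atoms_R: "{x. atom R x} = e ` {a. satom S a}"
proof
  show "{x. atom R x} \<subseteq> e ` {a. satom S a}" using atom_R' by blast
  show "e ` {a. satom S a} \<subseteq> {x. atom R x}"
    using atom_R by (auto simp: satom_def)
qed

lemma classes_R: "atom_classes R = (image e) ` (sclass S ` {a. satom S a})"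
proof -
  have "atom_classes R = (\<lambda>a. assoc_class R (e a)) ` {a. satom S a}"
    unfolding atom_classes_def atoms_R by (simp add: image_image)
  also have "\<dots> = (\<lambda>a. e ` sclass S a) ` {a. satom S a}"
    by (rule image_cong) (auto simp: class_R satom_def)
  also have "\<dots> = (image e) ` (sclass S ` {a. satom S a})"
    by (simp add: image_image)
  finally show ?thesis .
qed

lemma ecard_R: "ecard (atom_classes R) = ecard (sclass S ` {a. satom S a})"
proof -
  have i: "inj_on (image e) (sclass S ` {a. satom S a})"
    by (rule inj_on_subset[OF inj_on_image_Pow[OF inj]]) (auto simp: sclass_def)
  show ?thesis unfolding classes_R ecard_def
    using finite_image_iff[OF i] card_image[OF i] by simp
qed

lemma sassoc_refl: "a \<in> S \<Longrightarrow> sassoc S a a"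
  unfolding sassoc_def sdvd_def using S1 by (auto intro!: bexI[of _ 1])

lemma sassoc_sym: "sassoc S a b \<Longrightarrow> sassoc S b a"
  unfolding sassoc_def by simp

lemma sdvd_trans: "sdvd S a b \<Longrightarrow> sdvd S b c \<Longrightarrow> sdvd S a c"
  unfolding sdvd_def using Smul by (metis mult.assoc)

lemma sassoc_trans: "sassoc S a b \<Longrightarrow> sassoc S b c \<Longrightarrow> sassoc S a c"
  unfolding sassoc_def using sdvd_trans by blast

lemma sclass_eq_iff: "a \<in> S \<Longrightarrow> b \<in> S \<Longrightarrow> sclass S a = sclass S b \<longleftrightarrow> sassoc S a b"
proof
  assume "a \<in> S" "b \<in> S" "sclass S a = sclass S b"
  then have "b \<in> sclass S a" using sassoc_refl by (auto simp: sclass_def)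
  then show "sassoc S a b" by (simp add: sclass_def)
next
  assume "sassoc S a b"
  then show "sclass S a = sclass S b"
    unfolding sclass_def using sassoc_trans sassoc_sym by blast
qed

lemma IDF_R:
  assumes "\<And>x. x \<in> S \<Longrightarrow> x \<noteq> 0 \<Longrightarrow> finite (sclass S ` {a. satom S a \<and> sdvd S a x})"
  shows "IDF_dom R"
  unfolding IDF_dom_def
proof (intro ballI impI)
  fix x assume x: "x \<in> carrier R" "x \<noteq> \<zero>\<^bsub>R\<^esub>"
  then obtain b where b: "b \<in> S" "x = e b" by auto
  with x have "b \<noteq> 0" by auto
  have "assoc_class R ` {a. atom R a \<and> a divides\<^bsub>R\<^esub> x} \<subseteq>
     (image e) ` (sclass S ` {a. satom S a \<and> sdvd S a b})"
  proof
    fix C assume "C \<in> assoc_class R ` {a. atom R a \<and> a divides\<^bsub>R\<^esub> x}"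
    then obtain y where y: "atom R y" "y divides\<^bsub>R\<^esub> x" "C = assoc_class R y" by auto
    from atom_R'[OF y(1)] obtain a where a: "y = e a" "satom S a" by auto
    have aS: "a \<in> S" using a by (simp add: satom_def)
    have "sdvd S a b" using y(2) a b divides_R aS by simp
    then show "C \<in> (image e) ` (sclass S ` {a. satom S a \<and> sdvd S a b})"
      using y(3) a class_R aS by auto
  qed
  moreover have "finite ((image e) ` (sclass S ` {a. satom S a \<and> sdvd S a b}))"
    using assms[OF b(1) \<open>b \<noteq> 0\<close>] by simp
  ultimately show "finite (assoc_class R ` {a. atom R a \<and> a divides\<^bsub>R\<^esub> x})"
    by (rule finite_subset)
qed

lemma nonatomic_R:
  assumes Q1: "Q 1" and Qm: "\<And>a b. a \<in> S \<Longrightarrow> b \<in> S \<Longrightarrow> Q a \<Longrightarrow> Q b \<Longrightarrow> Q (a * b)"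
    and Qa: "\<And>a. satom S a \<Longrightarrow> Q a"
    and x: "x \<in> S" "x \<noteq> 0" "\<not> sunit S x" "\<not> Q x"
  shows "\<not> atomic_dom R"
proof
  assume "atomic_dom R"
  moreover have "e x \<in> carrier R" "e x \<noteq> \<zero>\<^bsub>R\<^esub>" "e x \<notin> Units R"
    using x S0 units_R by auto
  ultimately obtain as where as: "\<forall>a\<in>set as. atom R a" "e x = foldr (\<lambda>a b. a \<otimes>\<^bsub>R\<^esub> b) as \<one>\<^bsub>R\<^esub>"
    unfolding atomic_dom_def by blast
  have "\<forall>a\<in>set as. atom R a \<Longrightarrow> \<exists>c. c \<in> S \<and> Q c \<and> foldr (\<lambda>a b. a \<otimes>\<^bsub>R\<^esub> b) as \<one>\<^bsub>R\<^esub> = e c" for as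
  proof (induction as)
    case Nil then show ?case using S1 Q1 by auto
  next
    case (Cons y as)
    then obtain c where c: "c \<in> S" "Q c" "foldr (\<lambda>a b. a \<otimes>\<^bsub>R\<^esub> b) as \<one>\<^bsub>R\<^esub> = e c" by auto
    obtain a where a: "y = e a" "satom S a" using atom_R' Cons.prems by force
    have aS: "a \<in> S" using a by (simp add: satom_def)
    show ?case using a c aS Qa Qm Smul by (intro exI[of _ "a * c"]) auto
  qed
  then obtain c where "c \<in> S" "Q c" "e x = e c" using as by metis
  then show False using x by simp
qed

end


definition Zs :: "int set \<Rightarrow> rat set" where
  "Zs P = {q. \<exists>b::int. b \<noteq> 0 \<and> (\<forall>p\<in>P. \<not> p dvd b) \<and> of_int b * q \<in> \<int>}"

locale primes_set =
  fixes P :: "int set"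
  assumes P_prime: "\<And>p. p \<in> P \<Longrightarrow> prime p"
begin

lemma Zs_int: "of_int n \<in> Zs P"
proof -
  have "\<forall>p\<in>P. \<not> p dvd 1" using P_prime not_prime_unit by blast
  then show ?thesis unfolding Zs_def by (intro CollectI exI[of _ 1]) auto
qed

lemma Zs_0: "0 \<in> Zs P" and Zs_1: "1 \<in> Zs P"
  using Zs_int[of 0] Zs_int[of 1] by auto

lemma Zs_mul: assumes "x \<in> Zs P" "y \<in> Zs P" shows "x * y \<in> Zs P"
proof -
  obtain b1 where b1: "b1 \<noteq> 0" "\<forall>p\<in>P. \<not> p dvd b1" "of_int b1 * x \<in> \<int>" using assms(1) by (auto simp: Zs_def)
  obtain b2 where b2: "b2 \<noteq> 0" "\<forall>p\<in>P. \<not> p dvd b2" "of_int b2 * y \<in> \<int>" using assms(2) by (auto simp: Zs_def)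
  have "of_int (b1 * b2) * (x * y) = (of_int b1 * x) * (of_int b2 * y)" by simp
  also have "\<dots> \<in> \<int>" using b1(3) b2(3) by (rule Ints_mult)
  finally have "of_int (b1 * b2) * (x * y) \<in> (\<int> :: rat set)" .
  moreover have "\<forall>p\<in>P. \<not> p dvd b1 * b2" using b1 b2 P_prime by (auto simp: prime_dvd_mult_iff)
  ultimately show ?thesis using b1 b2 unfolding Zs_def by (intro CollectI exI[of _ "b1 * b2"]) auto
qed

lemma Zs_add: assumes "x \<in> Zs P" "y \<in> Zs P" shows "x + y \<in> Zs P"
proof -
  obtain b1 where b1: "b1 \<noteq> 0" "\<forall>p\<in>P. \<not> p dvd b1" "of_int b1 * x \<in> \<int>" using assms(1) by (auto simp: Zs_def)
  obtain b2 where b2: "b2 \<noteq> 0" "\<forall>p\<in>P. \<not> p dvd b2" "of_int b2 * y \<in> \<int>" using assms(2) by (auto simp: Zs_def)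
  have "of_int (b1 * b2) * (x + y) = of_int b2 * (of_int b1 * x) + of_int b1 * (of_int b2 * y)"
    by (simp add: algebra_simps)
  also have "\<dots> \<in> \<int>" by (meson Ints_add Ints_mult Ints_of_int b1(3) b2(3))
  finally have "of_int (b1 * b2) * (x + y) \<in> (\<int> :: rat set)" .
  moreover have "\<forall>p\<in>P. \<not> p dvd b1 * b2" using b1 b2 P_prime by (auto simp: prime_dvd_mult_iff)
  ultimately show ?thesis using b1 b2 unfolding Zs_def by (intro CollectI exI[of _ "b1 * b2"]) auto
qed

lemma Zs_neg: assumes "x \<in> Zs P" shows "- x \<in> Zs P"
  using Zs_mul[OF Zs_int[of "-1"] assms] by simp

lemma nonunit_dvd:
  assumes c: "c \<in> Zs P" "c \<noteq> 0" and b: "b \<noteq> 0" "\<forall>p\<in>P. \<not> p dvd b" "of_int b * c = of_int m"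
    and nu: "\<not> sunit (Zs P) c"
  shows "\<exists>p\<in>P. p dvd m"
proof (rule ccontr)
  assume "\<not> (\<exists>p\<in>P. p dvd m)"
  moreover have "m \<noteq> 0" using b c by auto
  moreover have "of_int m * (1 / c) = (of_int b :: rat)" using b(3) c(2) by (simp add: field_simps)
  ultimately have "1 / c \<in> Zs P" unfolding Zs_def by (intro CollectI exI[of _ m]) auto
  then have "sunit (Zs P) c" using c unfolding sunit_def by (intro conjI bexI[of _ "1/c"]) auto
  then show False using nu by simp
qed

lemma Zs_nonunit_div:
  assumes "P \<noteq> {}" "c \<in> Zs P" "\<not> sunit (Zs P) c"
  shows "\<exists>p\<in>P. c / of_int p \<in> Zs P"
proof (cases "c = 0")
  case True then show ?thesis using assms Zs_0 by auto
next
  case False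
  obtain b where b: "b \<noteq> 0" "\<forall>p\<in>P. \<not> p dvd b" "of_int b * c \<in> \<int>" using assms(2) by (auto simp: Zs_def)
  then obtain m where m: "of_int b * c = of_int m" by (auto elim: Ints_cases)
  obtain p where p: "p \<in> P" "p dvd m" using nonunit_dvd[OF assms(2) False b(1,2) m assms(3)] by blast
  then obtain k where k: "m = p * k" by (auto elim: dvdE)
  have "p \<noteq> 0" using P_prime[OF p(1)] by (metis not_prime_0)
  then have "of_int b * (c / of_int p) = (of_int k :: rat)" using m k by (simp add: field_simps)
  then have "c / of_int p \<in> Zs P" using b unfolding Zs_def by (intro CollectI exI[of _ b]) auto
  then show ?thesis using p by blast
qed

lemma Zs_p_nonunit: assumes "p \<in> P" shows "\<not> sunit (Zs P) (of_int p)"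
proof
  assume "sunit (Zs P) (of_int p)"
  then obtain v where v: "v \<in> Zs P" "of_int p * v = 1" by (auto simp: sunit_def)
  obtain b where b: "b \<noteq> 0" "\<forall>p\<in>P. \<not> p dvd b" "of_int b * v \<in> \<int>" using v(1) by (auto simp: Zs_def)
  then obtain k where k: "of_int b * v = of_int k" by (auto elim: Ints_cases)
  have "of_int b = of_int b * (of_int p * v)" using v by simp
  also have "\<dots> = of_int p * (of_int k :: rat)" using k by (simp add: algebra_simps)
  finally have "b = p * k" by (simp flip: of_int_mult)
  then show False using b assms by auto
qed

lemma Zs_other: assumes "p \<in> P" "q \<in> P" "p \<noteq> q" shows "of_int q / of_int p \<notin> Zs P"
proof
  assume "of_int q / of_int p \<in> Zs P"
  then obtain b where b: "b \<noteq> 0" "\<forall>p\<in>P. \<not> p dvd b" "of_int b * (of_int q / of_int p) \<in> (\<int>::rat set)" by (auto simp: Zs_def)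
  then obtain k where k: "of_int b * (of_int q / of_int p) = (of_int k :: rat)" by (auto elim: Ints_cases)
  have "p \<noteq> 0" using P_prime[OF assms(1)] by (metis not_prime_0)
  with k have "of_int (b * q) = (of_int (p * k) :: rat)" by (simp add: field_simps)
  then have "b * q = p * k" by (simp only: of_int_eq_iff)
  then have "p dvd b * q" by simp
  then have "p dvd b \<or> p dvd q" using P_prime assms by (simp add: prime_dvd_mult_iff)
  moreover have "\<not> p dvd q"
    using P_prime assms primes_dvd_imp_eq by blast
  ultimately show False using b assms by auto
qed

lemma Zs_atom:
  assumes p: "p \<in> P" and uv: "u \<in> Zs P" "v \<in> Zs P" "u * v = of_int p"
  shows "sunit (Zs P) u \<or> sunit (Zs P) v"
proof (rule ccontr)
  assume nn: "\<not> (sunit (Zs P) u \<or> sunit (Zs P) v)"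
  have pp: "prime p" using P_prime p by auto
  then have "u \<noteq> 0" "v \<noteq> 0" using uv by auto
  obtain b1 where b1: "b1 \<noteq> 0" "\<forall>p\<in>P. \<not> p dvd b1" "of_int b1 * u \<in> \<int>" using uv(1) by (auto simp: Zs_def)
  then obtain m1 where m1: "of_int b1 * u = of_int m1" by (auto elim: Ints_cases)
  obtain b2 where b2: "b2 \<noteq> 0" "\<forall>p\<in>P. \<not> p dvd b2" "of_int b2 * v \<in> \<int>" using uv(2) by (auto simp: Zs_def)
  then obtain m2 where m2: "of_int b2 * v = of_int m2" by (auto elim: Ints_cases)
  obtain q1 where q1: "q1 \<in> P" "q1 dvd m1" using nonunit_dvd[OF uv(1) \<open>u \<noteq> 0\<close> b1(1,2) m1] nn by blast
  obtain q2 where q2: "q2 \<in> P" "q2 dvd m2" using nonunit_dvd[OF uv(2) \<open>v \<noteq> 0\<close> b2(1,2) m2] nn by blast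
  have "of_int (m1 * m2) = (of_int (b1 * b2 * p) :: rat)"
    using m1 m2 uv(3) by (simp flip: m1 m2 uv(3) add: algebra_simps)
  then have e: "m1 * m2 = b1 * b2 * p" by (simp only: of_int_eq_iff)
  have nb: "\<not> q dvd b1 * b2" if "q \<in> P" for q using b1 b2 that P_prime by (simp add: prime_dvd_mult_iff)
  have "q1 dvd b1 * b2 * p" using q1 e by (metis dvd_mult2)
  then have "q1 dvd p" using nb[OF q1(1)] P_prime q1(1) by (simp add: prime_dvd_mult_iff)
  then have "q1 = p" using P_prime q1(1) pp primes_dvd_imp_eq by blast
  have "q2 dvd b1 * b2 * p" using q2 e by (metis dvd_mult)
  then have "q2 dvd p" using nb[OF q2(1)] P_prime q2(1) by (simp add: prime_dvd_mult_iff)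
  then have "q2 = p" using P_prime q2(1) pp primes_dvd_imp_eq by blast
  have "p * p dvd b1 * b2 * p" using q1 q2 \<open>q1 = p\<close> \<open>q2 = p\<close> e by (metis mult_dvd_mono)
  then have "p dvd b1 * b2" using pp by (metis mult.commute dvd_mult_cancel_left prime_gt_0_int less_irrefl)
  then show False using nb[OF p] by simp
qed

end


definition enc :: "(nat \<Rightarrow> rat) \<Rightarrow> nat set" where
  "enc h = range (\<lambda>n. prod_encode (n, to_nat (h n)))"

lemma enc_inj: assumes "enc h1 = enc h2" shows "h1 = h2"
proof
  fix n
  have "prod_encode (n, to_nat (h1 n)) \<in> enc h2" using assms by (auto simp: enc_def)
  then show "h1 n = h2 n" by (auto simp: enc_def)
qed

definition SA :: "int set \<Rightarrow> rat fps set" where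
  "SA P = {f. f $ 0 \<in> Zs P}"

definition eA :: "rat fps \<Rightarrow> nat set" where
  "eA f = enc (fps_nth f)"

lemma unit0: "w * v = (1::rat fps) \<Longrightarrow> w $ 0 \<noteq> 0"
  by (metis fps_mult_nth_0 fps_one_nth mult_zero_left zero_neq_one)

context primes_set
begin

lemma trA: "tr (SA P) eA"
proof
  show "0 \<in> SA P" "1 \<in> SA P" using Zs_0 Zs_1 by (auto simp: SA_def)
  show "a + b \<in> SA P" "a * b \<in> SA P" if "a \<in> SA P" "b \<in> SA P" for a b
    using that Zs_add Zs_mul by (auto simp: SA_def)
  show "- a \<in> SA P" if "a \<in> SA P" for a using that Zs_neg by (auto simp: SA_def)
  show "inj_on eA (SA P)"
    by (rule inj_onI) (auto simp: eA_def dest!: enc_inj intro: fps_ext)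
qed

lemma sunit_SA: assumes "f \<in> SA P" shows "sunit (SA P) f \<longleftrightarrow> sunit (Zs P) (f $ 0)"
proof
  assume "sunit (SA P) f"
  then obtain g where "g \<in> SA P" "f * g = 1" by (auto simp: sunit_def)
  then have "f $ 0 * g $ 0 = 1" by (metis fps_mult_nth_0 fps_one_nth)
  then show "sunit (Zs P) (f $ 0)" using assms \<open>g \<in> SA P\<close> by (auto simp: sunit_def SA_def)
next
  assume "sunit (Zs P) (f $ 0)"
  then obtain c where c: "c \<in> Zs P" "f $ 0 * c = 1" by (auto simp: sunit_def)
  then have "f $ 0 \<noteq> 0" by auto
  have "inverse (f $ 0) = c" using c(2) by (rule inverse_unique)
  then have "inverse f \<in> SA P" using c by (simp add: SA_def)
  moreover have "f * inverse f = 1" using \<open>f $ 0 \<noteq> 0\<close> by (rule inverse_mult_eq_1')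
  ultimately show "sunit (SA P) f" using assms by (auto simp: sunit_def)
qed

definition cp :: "int \<Rightarrow> rat fps" where "cp p = fps_const (of_int p)"

lemma cp_SA: "cp p \<in> SA P" by (simp add: cp_def SA_def Zs_int)

lemma cp_atom: assumes "p \<in> P" shows "satom (SA P) (cp p)"
  unfolding satom_def
proof (intro conjI ballI impI)
  show "cp p \<in> SA P" by (rule cp_SA)
  show "cp p \<noteq> 0" using P_prime[OF assms] by (auto simp: cp_def)
  show "\<not> sunit (SA P) (cp p)" using Zs_p_nonunit[OF assms] sunit_SA[OF cp_SA[of p]] by (simp add: cp_def)
  fix u v assume uv: "u \<in> SA P" "v \<in> SA P" "cp p = u * v"
  then have "u $ 0 * v $ 0 = of_int p" by (metis cp_def fps_nth_fps_const fps_mult_nth_0)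
  then have "sunit (Zs P) (u $ 0) \<or> sunit (Zs P) (v $ 0)"
    using Zs_atom[OF assms] uv by (auto simp: SA_def)
  then show "sunit (SA P) u \<or> sunit (SA P) v" using uv by (simp add: sunit_SA)
qed

lemma atom_assoc_cp:
  assumes "P \<noteq> {}" "satom (SA P) a"
  shows "\<exists>p\<in>P. sassoc (SA P) a (cp p) \<and> (\<exists>w. sunit (SA P) w \<and> a = cp p * w)"
proof -
  have aS: "a \<in> SA P" using assms by (simp add: satom_def)
  then have "\<not> sunit (Zs P) (a $ 0)" using assms by (simp add: satom_def sunit_SA)
  then obtain p where p: "p \<in> P" "a $ 0 / of_int p \<in> Zs P"
    using Zs_nonunit_div[OF assms(1)] aS by (auto simp: SA_def)
  have p0: "(of_int p :: rat) \<noteq> 0" using P_prime[OF p(1)] by (metis not_prime_0 of_int_eq_0_iff)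
  define w where "w = fps_const (1 / of_int p) * a"
  have wS: "w \<in> SA P" using p by (simp add: w_def SA_def)
  have aw: "a = cp p * w" using p0 by (simp add: w_def cp_def flip: mult.assoc)
  have "sunit (SA P) (cp p) \<or> sunit (SA P) w" using assms(2) aw wS cp_SA by (auto simp: satom_def)
  then have wu: "sunit (SA P) w" using cp_atom[OF p(1)] by (auto simp: satom_def)
  then obtain w' where w': "w' \<in> SA P" "w * w' = 1" by (auto simp: sunit_def)
  have "cp p = a * w'" using aw w' by (metis mult.assoc mult_1_right)
  then have "sassoc (SA P) a (cp p)" using aw wS w' by (auto simp: sassoc_def sdvd_def)
  then show ?thesis using p aw wu by blast
qed

lemma cp_not_assoc: assumes "p \<in> P" "q \<in> P" "sassoc (SA P) (cp p) (cp q)" shows "p = q"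
proof (rule ccontr)
  assume "p \<noteq> q"
  from assms(3) obtain c where c: "c \<in> SA P" "cp q = cp p * c" by (auto simp: sassoc_def sdvd_def)
  then have "of_int q = of_int p * c $ 0" by (metis cp_def fps_nth_fps_const fps_mult_nth_0)
  moreover have "(of_int p :: rat) \<noteq> 0" using P_prime[OF assms(1)] by (metis not_prime_0 of_int_eq_0_iff)
  ultimately have "c $ 0 = of_int q / of_int p" by (simp add: field_simps)
  then show False using c Zs_other[OF assms(1,2) \<open>p \<noteq> q\<close>] by (simp add: SA_def)
qed

lemma classes_SA: assumes "P \<noteq> {}"
  shows "sclass (SA P) ` {a. satom (SA P) a} = (\<lambda>p. sclass (SA P) (cp p)) ` P"
proof -
  interpret tr "SA P" eA by (rule trA)
  show ?thesis
  proof
    show "sclass (SA P) ` {a. satom (SA P) a} \<subseteq> (\<lambda>p. sclass (SA P) (cp p)) ` P"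
    proof
      fix C assume "C \<in> sclass (SA P) ` {a. satom (SA P) a}"
      then obtain a where a: "satom (SA P) a" "C = sclass (SA P) a" by auto
      obtain p where "p \<in> P" "sassoc (SA P) a (cp p)" using atom_assoc_cp[OF assms a(1)] by blast
      then show "C \<in> (\<lambda>p. sclass (SA P) (cp p)) ` P"
        using a sclass_eq_iff cp_SA by (auto simp: satom_def)
    qed
    show "(\<lambda>p. sclass (SA P) (cp p)) ` P \<subseteq> sclass (SA P) ` {a. satom (SA P) a}"
      using cp_atom by auto
  qed
qed

lemma ecard_SA: assumes "P \<noteq> {}" "finite P"
  shows "ecard (sclass (SA P) ` {a. satom (SA P) a}) = enat (card P)"
proof -
  interpret tr "SA P" eA by (rule trA)
  have "inj_on (\<lambda>p. sclass (SA P) (cp p)) P"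
    by (rule inj_onI) (simp add: sclass_eq_iff cp_SA cp_not_assoc)
  then show ?thesis using assms by (simp add: classes_SA ecard_def card_image)
qed

lemma atom_nz_SA: assumes "P \<noteq> {}" "satom (SA P) a" shows "a $ 0 \<noteq> 0"
proof -
  obtain p w where p: "p \<in> P" "sunit (SA P) w" "a = cp p * w" using atom_assoc_cp[OF assms] by blast
  have "w \<in> SA P" using p by (simp add: sunit_def)
  then have "w $ 0 \<noteq> 0" using p(2) by (auto simp: sunit_def dest: unit0)
  moreover have "(of_int p :: rat) \<noteq> 0" using P_prime[OF p(1)] by (metis not_prime_0 of_int_eq_0_iff)
  ultimately show ?thesis using p(3) by (simp add: cp_def)
qed

lemma ringA:
  assumes "P \<noteq> {}" "finite P"
  shows "domain (tr.R (SA P) eA) \<and> \<not> atomic_dom (tr.R (SA P) eA) \<and> IDF_dom (tr.R (SA P) eA) \<and>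
     ecard (atom_classes (tr.R (SA P) eA)) = enat (card P)"
proof -
  interpret tr "SA P" eA by (rule trA)
  have ec: "ecard (atom_classes R) = enat (card P)" using ecard_R ecard_SA[OF assms] by simp
  have "\<not> atomic_dom R"
  proof (rule nonatomic_R[where Q = "\<lambda>f. f $ 0 \<noteq> 0" and x = fps_X])
    show "fps_X \<in> SA P" by (simp add: SA_def Zs_0)
    show "\<not> sunit (SA P) fps_X" by (auto simp: sunit_def dest: unit0)
  qed (use atom_nz_SA[OF assms(1)] in auto)
  moreover have "IDF_dom R"
  proof -
    have "finite (atom_classes R)" using ec by (simp add: ecard_def split: if_splits)
    then show ?thesis unfolding IDF_dom_def atom_classes_def
      by (metis (no_types, lifting) finite_subset image_mono mem_Collect_eq subsetI)
  qed
  ultimately show ?thesis using domR ec by simp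
qed

end


lemma finite_sub_mset: "finite {M. M \<subseteq># F}"
proof -
  have "{M. M \<subseteq># F} \<subseteq> (\<Union>n\<in>{..size F}. multisets_of_size (set_mset F) n)"
    by (auto simp: multisets_of_size_def dest: set_mset_mono size_mset_mono)
  moreover have "finite (\<Union>n\<in>{..size F}. multisets_of_size (set_mset F) n)" by auto
  ultimately show ?thesis by (rule finite_subset)
qed

lemma finite_ndivs:
  fixes x :: "'a :: factorial_semiring"
  assumes "x \<noteq> 0" shows "finite {d. d dvd x \<and> normalize d = d}"
proof -
  have "{d. d dvd x \<and> normalize d = d} \<subseteq> (\<lambda>M. normalize (prod_mset M)) ` {M. M \<subseteq># prime_factorization x}"
  proof
    fix d assume d: "d \<in> {d. d dvd x \<and> normalize d = d}"
    then have "d \<noteq> 0" using assms by auto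
    then have "d = normalize (prod_mset (prime_factorization d))" using d by (simp add: prod_mset_prime_factorization_weak)
    moreover have "prime_factorization d \<subseteq># prime_factorization x"
      using d \<open>d \<noteq> 0\<close> assms by (simp add: prime_factorization_subset_iff_dvd)
    ultimately show "d \<in> (\<lambda>M. normalize (prod_mset M)) ` {M. M \<subseteq># prime_factorization x}" by blast
  qed
  then show ?thesis by (rule finite_surj[OF finite_sub_mset])
qed

lemma finite_c1_divs:
  fixes x :: "rat poly"
  assumes "x \<noteq> 0" shows "finite {g. coeff g 0 = 1 \<and> g dvd x}"
proof -
  have c: "coeff g 0 = unit_factor (lead_coeff g) * coeff (normalize g) 0" for g :: "rat poly"
  proof -
    have "coeff g 0 = coeff (unit_factor g * normalize g) 0" by (simp only: unit_factor_mult_normalize)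
    also have "\<dots> = unit_factor (lead_coeff g) * coeff (normalize g) 0"
      by (simp only: coeff_mult_0 unit_factor_poly_def coeff_pCons_0)
    finally show ?thesis .
  qed
  have "inj_on normalize {g. coeff g 0 = 1 \<and> g dvd x}"
  proof (rule inj_onI)
    fix g1 g2 assume g: "g1 \<in> {g. coeff g 0 = 1 \<and> g dvd x}" "g2 \<in> {g. coeff g 0 = 1 \<and> g dvd x}"
      and n: "normalize g1 = normalize g2"
    have h1: "coeff g1 0 = 1" and h2: "coeff g2 0 = 1" using g by blast+
    have e1: "unit_factor (lead_coeff g1) * coeff (normalize g1) 0 = 1" by (rule trans[OF sym[OF c[of g1]] h1])
    have e2': "unit_factor (lead_coeff g2) * coeff (normalize g2) 0 = 1" by (rule trans[OF sym[OF c[of g2]] h2])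
    have e2: "unit_factor (lead_coeff g2) * coeff (normalize g1) 0 = 1" using e2' by (simp only: n)
    have "coeff (normalize g1) 0 \<noteq> 0" using e1 by (metis mult_zero_right zero_neq_one)
    then have "unit_factor (lead_coeff g1) = unit_factor (lead_coeff g2)"
      using e1 e2 by (metis mult_right_cancel)
    then have "unit_factor g1 = unit_factor g2" by (simp only: unit_factor_poly_def)
    then have "unit_factor g1 * normalize g1 = unit_factor g2 * normalize g2" using n by simp
    then show "g1 = g2" by (simp only: unit_factor_mult_normalize)
  qed
  moreover have "normalize ` {g. coeff g 0 = 1 \<and> g dvd x} \<subseteq> {d. d dvd x \<and> normalize d = d}"
    by auto
  then have "finite (normalize ` {g. coeff g 0 = 1 \<and> g dvd x})"
    by (rule finite_subset) (rule finite_ndivs[OF assms])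
  ultimately show ?thesis by (simp add: finite_image_iff)
qed

definition SB :: "rat poly set" where
  "SB = {f. coeff f 0 \<in> Zs {2}}"

definition eB :: "rat poly \<Rightarrow> nat set" where
  "eB f = enc (coeff f)"

interpretation Z2: primes_set "{2}"
  by standard simp

lemma trB: "tr SB eB"
proof
  show "0 \<in> SB" "1 \<in> SB" using Z2.Zs_0 Z2.Zs_1 by (auto simp: SB_def)
  show "a + b \<in> SB" "a * b \<in> SB" if "a \<in> SB" "b \<in> SB" for a b
    using that Z2.Zs_add Z2.Zs_mul by (auto simp: SB_def coeff_mult_0)
  show "- a \<in> SB" if "a \<in> SB" for a using that Z2.Zs_neg by (auto simp: SB_def)
  show "inj_on eB SB"
    by (rule inj_onI) (auto simp: eB_def dest!: enc_inj intro: poly_eqI)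
qed

lemma unitB: assumes "sunit SB f" shows "degree f = 0" "sunit (Zs {2}) (coeff f 0)"
proof -
  obtain g where g: "f \<in> SB" "g \<in> SB" "f * g = 1" using assms by (auto simp: sunit_def)
  then have "f \<noteq> 0" "g \<noteq> 0" by auto
  then show "degree f = 0" using g degree_mult_eq[of f g] by simp
  have "coeff f 0 * coeff g 0 = 1" using g by (metis coeff_mult_0 one_poly_eq_simps(1) coeff_pCons_0)
  then show "sunit (Zs {2}) (coeff f 0)" using g by (auto simp: sunit_def SB_def)
qed

lemma unitB': assumes "f \<in> SB" "degree f = 0" "sunit (Zs {2}) (coeff f 0)" shows "sunit SB f"
proof -
  obtain c where c: "c \<in> Zs {2}" "coeff f 0 * c = 1" using assms by (auto simp: sunit_def)
  have "f = [:coeff f 0:]" using assms degree_0_id by metis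
  then have "f * [:c:] = [:coeff f 0:] * [:c:]" by simp
  also have "\<dots> = 1" using c(2) by (simp add: one_pCons mult.commute)
  finally have "f * [:c:] = 1" .
  moreover have "[:c:] \<in> SB" using c(1) by (simp add: SB_def)
  ultimately show ?thesis using assms(1) unfolding sunit_def by blast
qed

lemma two_nonunit: "\<not> sunit SB [:2:]"
  using unitB(2) Z2.Zs_p_nonunit[of 2] by fastforce

lemma atomB_c0: assumes "satom SB a" shows "coeff a 0 \<noteq> 0"
proof
  assume a0: "coeff a 0 = 0"
  have aS: "a \<in> SB" using assms by (simp add: satom_def)
  define w where "w = smult (1/2) a"
  have wS: "w \<in> SB" using a0 Z2.Zs_0 by (simp add: w_def SB_def)
  have "a = [:2:] * w" by (simp add: w_def)
  moreover have "[:2:] \<in> SB" using Z2.Zs_int[of 2] by (simp add: SB_def)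
  ultimately have "sunit SB [:2:] \<or> sunit SB w" using assms wS by (auto simp: satom_def)
  moreover have "\<not> sunit SB w" using unitB(2)[of w] a0 by (auto simp: w_def sunit_def)
  ultimately show False using two_nonunit by blast
qed

definition gB :: "nat \<Rightarrow> rat poly" where "gB n = [:1, of_nat n:]"

lemma gB_atom: assumes "n \<ge> 1" shows "satom SB (gB n)"
  unfolding satom_def
proof (intro conjI ballI impI)
  show gS: "gB n \<in> SB" using Z2.Zs_1 by (simp add: gB_def SB_def)
  show "gB n \<noteq> 0" by (simp add: gB_def)
  have dg: "degree (gB n) = 1" using assms by (simp add: gB_def)
  then show "\<not> sunit SB (gB n)" using unitB(1) by fastforce
  fix u v assume uv: "u \<in> SB" "v \<in> SB" "gB n = u * v"
  then have "u \<noteq> 0" "v \<noteq> 0" using \<open>gB n \<noteq> 0\<close> by auto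
  then have dd: "degree u + degree v = 1" using uv dg degree_mult_eq by metis
  have "coeff u 0 * coeff v 0 = 1" using uv by (metis coeff_mult_0 gB_def coeff_pCons_0)
  moreover have "coeff u 0 \<in> Zs {2}" "coeff v 0 \<in> Zs {2}" using uv by (auto simp: SB_def)
  ultimately have "sunit (Zs {2}) (coeff u 0)" "sunit (Zs {2}) (coeff v 0)"
    unfolding sunit_def by (metis mult.commute)+
  moreover have "degree u = 0 \<or> degree v = 0" using dd by arith
  ultimately show "sunit SB u \<or> sunit SB v" using unitB' uv by blast
qed

lemma gB_inj: assumes "n \<ge> 1" "m \<ge> 1" "sassoc SB (gB n) (gB m)" shows "n = m"
proof -
  obtain c where c: "c \<in> SB" "gB m = gB n * c" using assms by (auto simp: sassoc_def sdvd_def)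
  have "c \<noteq> 0" using c by (auto simp: gB_def)
  then have "degree (gB m) = degree (gB n) + degree c" using c degree_mult_eq by (metis gB_def pCons_eq_0_iff one_neq_zero)
  moreover have "degree (gB m) = 1" "degree (gB n) = 1" using assms by (auto simp: gB_def)
  ultimately have "degree c = 0" by auto
  then have cc: "c = [:coeff c 0:]" by (metis degree_0_id)
  have "coeff (gB m) 0 = coeff (gB n) 0 * coeff c 0" using c by (simp add: coeff_mult_0)
  then have "coeff c 0 = 1" by (simp add: gB_def)
  then have "c = 1" using cc by (simp add: one_pCons)
  then have "gB m = gB n" using c by simp
  then show ?thesis by (simp add: gB_def)
qed

lemma ecard_SB: "ecard (sclass SB ` {a. satom SB a}) = \<infinity>"
proof -
  interpret tr SB eB by (rule trB)
  have "inj_on (\<lambda>n. sclass SB (gB n)) {1..}"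
  proof (rule inj_onI)
    fix n m assume nm: "n \<in> {1..}" "m \<in> {1..}" "sclass SB (gB n) = sclass SB (gB m)"
    then have "sassoc SB (gB n) (gB m)"
      using sclass_eq_iff gB_atom by (auto simp: satom_def)
    then show "n = m" using gB_inj nm by auto
  qed
  then have "infinite ((\<lambda>n. sclass SB (gB n)) ` {1..})"
    by (simp add: finite_image_iff infinite_Ici)
  moreover have "(\<lambda>n. sclass SB (gB n)) ` {1..} \<subseteq> sclass SB ` {a. satom SB a}"
    using gB_atom by auto
  ultimately have "infinite (sclass SB ` {a. satom SB a})" using finite_subset by blast
  then show ?thesis by (simp add: ecard_def)
qed

lemma IDF_SB: assumes "x \<in> SB" "x \<noteq> 0"
  shows "finite (sclass SB ` {a. satom SB a \<and> sdvd SB a x})"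
proof -
  interpret tr SB eB by (rule trB)
  have two: "[:2:] \<in> SB" using Z2.Zs_int[of 2] by (simp add: SB_def)
  have "sclass SB ` {a. satom SB a \<and> sdvd SB a x} \<subseteq>
    insert (sclass SB [:2:]) (sclass SB ` {g. coeff g 0 = 1 \<and> g dvd x})"
  proof
    fix C assume "C \<in> sclass SB ` {a. satom SB a \<and> sdvd SB a x}"
    then obtain a where a: "satom SB a" "sdvd SB a x" "C = sclass SB a" by auto
    have aS: "a \<in> SB" using a by (simp add: satom_def)
    define c where "c = coeff a 0"
    have c0: "c \<noteq> 0" using atomB_c0[OF a(1)] by (simp add: c_def)
    have cZ: "c \<in> Zs {2}" using aS by (simp add: c_def SB_def)
    show "C \<in> insert (sclass SB [:2:]) (sclass SB ` {g. coeff g 0 = 1 \<and> g dvd x})"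
    proof (cases "sunit (Zs {2}) c")
      case True
      then obtain c' where c': "c' \<in> Zs {2}" "c * c' = 1" by (auto simp: sunit_def)
      then have c'': "c' = 1 / c" using c0 by (simp add: field_simps)
      define g where "g = smult (1 / c) a"
      have g1: "coeff g 0 = 1" using c0 by (simp add: g_def c_def)
      then have gS: "g \<in> SB" using Z2.Zs_1 by (simp add: SB_def)
      have ag: "a = [:c:] * g" using c0 by (simp add: g_def)
      have ga: "g = a * [:c':]" using c'' by (simp add: g_def mult.commute)
      have "[:c:] \<in> SB" "[:c':] \<in> SB" using cZ c' by (auto simp: SB_def)
      then have "sassoc SB a g" using ag ga unfolding sassoc_def sdvd_def by (metis mult.commute)
      then have "C = sclass SB g" using a(3) aS gS sclass_eq_iff by simp
      moreover have "g dvd x"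
      proof -
        have "g dvd a" using ag by (simp add: dvd_smult)
        moreover have "a dvd x" using a(2) by (auto simp: sdvd_def)
        ultimately show ?thesis by (rule dvd_trans)
      qed
      ultimately show ?thesis using g1 by blast
    next
      case False
      then obtain p where p: "p \<in> {2}" "c / of_int p \<in> Zs {2}"
        using Z2.Zs_nonunit_div cZ by blast
      then have p2: "c / 2 \<in> Zs {2}" by simp
      define w where "w = smult (1/2) a"
      have wS: "w \<in> SB" using p2 by (simp add: w_def SB_def c_def)
      have aw: "a = [:2:] * w" by (simp add: w_def)
      have "sunit SB [:2:] \<or> sunit SB w" using a(1) aw wS two by (auto simp: satom_def)
      then have "sunit SB w" using two_nonunit by blast
      then obtain w' where w': "w' \<in> SB" "w * w' = 1" by (auto simp: sunit_def)
      have "[:2:] = a * w'" using aw w' by (metis mult.assoc mult_1_right)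
      then have "sassoc SB a [:2:]" using aw wS w' unfolding sassoc_def sdvd_def by blast
      then have "C = sclass SB [:2:]" using a(3) aS two sclass_eq_iff by simp
      then show ?thesis by blast
    qed
  qed
  moreover have "finite (insert (sclass SB [:2:]) (sclass SB ` {g. coeff g 0 = 1 \<and> g dvd x}))"
    using finite_c1_divs[OF assms(2)] by simp
  ultimately show ?thesis by (rule finite_subset)
qed

lemma ringB:
  "domain (tr.R SB eB) \<and> \<not> atomic_dom (tr.R SB eB) \<and> IDF_dom (tr.R SB eB) \<and>
     ecard (atom_classes (tr.R SB eB)) = \<infinity>"
proof -
  interpret tr SB eB by (rule trB)
  have ec: "ecard (atom_classes R) = \<infinity>" using ecard_R ecard_SB by simp
  have "\<not> atomic_dom R"
  proof (rule nonatomic_R[where Q = "\<lambda>f. coeff f 0 \<noteq> 0" and x = "[:0, 1:]"])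
    show "[:0, 1:] \<in> SB" by (simp add: SB_def Z2.Zs_0)
    show "\<not> sunit SB [:0, 1:]" using unitB(1) by fastforce
  qed (use atomB_c0 in \<open>auto simp: coeff_mult_0\<close>)
  moreover have "IDF_dom R" by (rule IDF_R) (rule IDF_SB)
  ultimately show ?thesis using domR ec by simp
qed

theorem mainTheorem4:
  fixes l :: enat
  assumes "l \<noteq> 0"
  shows "\<exists>R :: (nat set) ring. domain R \<and> \<not> atomic_dom R \<and> IDF_dom R \<and>
           ecard (atom_classes R) = l"
proof (cases l)
  case infinity
  then show ?thesis using ringB by blast
next
  case (enat n)
  with assms have n: "n \<ge> 1" by (simp add: enat_0_iff)
  have "infinite (int ` {p::nat. prime p})"
    using primes_infinite by (simp add: finite_image_iff)
  moreover have "int ` {p::nat. prime p} \<subseteq> {p::int. prime p}" by auto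
  ultimately have "infinite {p::int. prime p}" using finite_subset by blast
  then obtain P where P: "P \<subseteq> {p::int. prime p}" "finite P" "card P = n"
    using infinite_arbitrarily_large by blast
  then have "P \<noteq> {}" using n by auto
  interpret primes_set P by standard (use P in auto)
  show ?thesis using ringA[OF \<open>P \<noteq> {}\<close> P(2)] P(3) enat by blast
qed

end
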